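(* Let the monoid module $S$ over $M$ be $\omega$-bicontinuous. Then for all programs $C$ and initial states $\sigma$, \[ \mathsf{wlp}[C](\mathbf{0})(\sigma) \;=\; \bigwedge_{n\in\mathbb{N}} \ \bigoplus_{\pi \in \mathrm{Paths}^{n}(\langle C,\sigma\rangle)} \mathrm{wgt}(\pi)\otimes \top, \] where $\bigwedge$ denotes the infimum (meet) with respect to the natural order of $S$.
   Context: $M=(M,\odot,1)$ is a monoid of weights and $S=(S,\oplus,\mathbf{0},\otimes)$ an $M$-module: a commutative monoid with an associative, distributive left action $\otimes\colon M\times S\to S$ with $1\otimes a=a$, $v\otimes\mathbf{0}=\mathbf{0}$. Natural order: $a\preceq b$ iff $\exists c:\ a\oplus c=b$. $\omega$-bicontinuous means both the natural order and its reverse are pointed $\omega$-cpos (so there is a greatest element $\top$) and $\oplus,\otimes$ are $\omega$-continuous w.r.t.\ both. $C$ is a weighted guarded-command (wGCL) program (assignments, sequencing, conditionals, binary branching $\{C_1\}\oplus\{C_2\}$, weighting statements $\odot a$ for $a\in M$, while loops); $\mathsf{wlp}$ is the weakest liberal preweighting transformer (the backward weighting-transformer semantics where loops are given by greatest fixed points; for weightings $f\colon\Sigma\to S$, $\mathsf{wlp}[\odot a](f)=a\otimes f$, branching maps to $\oplus$, etc.), and $\mathbf{0}$ here is the constant-$\mathbf{0}$ postweighting. $\mathrm{Paths}^{n}(\langle C,\sigma\rangle)$ is the set of (not necessarily terminating) computation paths of length $n$ in the small-step operational semantics starting in the configuration $\langle C,\sigma\rangle$, and $\mathrm{wgt}(\pi)\in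 M$ is the weight of path $\pi$, the product of the weights collected along it. *)

theory Defs
  imports Main
begin

definition nat_le :: "'s::comm_monoid_add \<Rightarrow> 's \<Rightarrow> bool" where
  "nat_le a b \<longleftrightarrow> (\<exists>c. a + c = b)"

definition is_nat_lub :: "'s::comm_monoid_add set \<Rightarrow> 's \<Rightarrow> bool" where
  "is_nat_lub A s \<longleftrightarrow> (\<forall>a\<in>A. nat_le a s) \<and> (\<forall>u. (\<forall>a\<in>A. nat_le a u) \<longrightarrow> nat_le s u)"

definition is_nat_glb :: "'s::comm_monoid_add set \<Rightarrow> 's \<Rightarrow> bool" where
  "is_nat_glb A s \<longleftrightarrow> (\<forall>a\<in>A. nat_le s a) \<and> (\<forall>u. (\<forall>a\<in>A. nat_le u a) \<longrightarrow> nat_le u s)"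

definition nat_Inf :: "'s::comm_monoid_add set \<Rightarrow> 's" where
  "nat_Inf A = (THE s. is_nat_glb A s)"

definition nat_top :: "'s::comm_monoid_add" where
  "nat_top = (THE t. \<forall>a. nat_le a t)"

definition nat_inc_chain :: "(nat \<Rightarrow> 's::comm_monoid_add) \<Rightarrow> bool" where
  "nat_inc_chain ch \<longleftrightarrow> (\<forall>i. nat_le (ch i) (ch (Suc i)))"

definition nat_dec_chain :: "(nat \<Rightarrow> 's::comm_monoid_add) \<Rightarrow> bool" where
  "nat_dec_chain ch \<longleftrightarrow> (\<forall>i. nat_le (ch (Suc i)) (ch i))"

definition monoid_module :: "('m::monoid_mult \<Rightarrow> 's::comm_monoid_add \<Rightarrow> 's) \<Rightarrow> bool" where
  "monoid_module act \<longleftrightarrow>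
     (\<forall>a. act 1 a = a) \<and>
     (\<forall>u v a. act (u * v) a = act u (act v a)) \<and>
     (\<forall>v a b. act v (a + b) = act v a + act v b) \<and>
     (\<forall>v. act v 0 = 0)"

text \<open>omega-bicontinuity: the natural order and its reverse are pointed omega-cpos
  (reflexivity and transitivity of nat_le hold in every commutative monoid, so the
  partial-order requirement amounts to antisymmetry), and + and the action are
  omega-continuous w.r.t. both orders.\<close>
definition omega_bicontinuous :: "('m::monoid_mult \<Rightarrow> 's::comm_monoid_add \<Rightarrow> 's) \<Rightarrow> bool" where
  "omega_bicontinuous act \<longleftrightarrow>
     (\<forall>a b::'s. nat_le a b \<and> nat_le b a \<longrightarrow> a = b) \<and>
     (\<exists>b::'s. \<forall>a. nat_le b a) \<and>
     (\<forall>ch::nat \<Rightarrow> 's. nat_inc_chain ch \<longrightarrow> (\<exists>s. is_nat_lub (range ch) s)) \<and>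
     (\<exists>t::'s. \<forall>a. nat_le a t) \<and>
     (\<forall>ch::nat \<Rightarrow> 's. nat_dec_chain ch \<longrightarrow> (\<exists>s. is_nat_glb (range ch) s)) \<and>
     (\<forall>(ch::nat \<Rightarrow> 's) b s. nat_inc_chain ch \<longrightarrow> is_nat_lub (range ch) s \<longrightarrow>
          is_nat_lub (range (\<lambda>i. ch i + b)) (s + b)) \<and>
     (\<forall>(ch::nat \<Rightarrow> 's) b s. nat_dec_chain ch \<longrightarrow> is_nat_glb (range ch) s \<longrightarrow>
          is_nat_glb (range (\<lambda>i. ch i + b)) (s + b)) \<and>
     (\<forall>(ch::nat \<Rightarrow> 's) v s. nat_inc_chain ch \<longrightarrow> is_nat_lub (range ch) s \<longrightarrow>
          is_nat_lub (range (\<lambda>i. act v (ch i))) (act v s)) \<and>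
     (\<forall>(ch::nat \<Rightarrow> 's) v s. nat_dec_chain ch \<longrightarrow> is_nat_glb (range ch) s \<longrightarrow>
          is_nat_glb (range (\<lambda>i. act v (ch i))) (act v s))"

datatype ('x, 'v, 'm) wgcl =
    Assign 'x "('x \<Rightarrow> 'v) \<Rightarrow> 'v"
  | Seq "('x, 'v, 'm) wgcl" "('x, 'v, 'm) wgcl"
  | Ite "('x \<Rightarrow> 'v) \<Rightarrow> bool" "('x, 'v, 'm) wgcl" "('x, 'v, 'm) wgcl"
  | Branch "('x, 'v, 'm) wgcl" "('x, 'v, 'm) wgcl"
  | Weight 'm
  | While "('x \<Rightarrow> 'v) \<Rightarrow> bool" "('x, 'v, 'm) wgcl"

definition fun_nat_le :: "('a \<Rightarrow> 's::comm_monoid_add) \<Rightarrow> ('a \<Rightarrow> 's) \<Rightarrow> bool" where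
  "fun_nat_le f g \<longleftrightarrow> (\<forall>x. nat_le (f x) (g x))"

definition nat_gfp :: "(('a \<Rightarrow> 's::comm_monoid_add) \<Rightarrow> ('a \<Rightarrow> 's)) \<Rightarrow> 'a \<Rightarrow> 's" where
  "nat_gfp \<Phi> = (THE X. \<Phi> X = X \<and> (\<forall>Y. \<Phi> Y = Y \<longrightarrow> fun_nat_le Y X))"

primrec wlp :: "('m::monoid_mult \<Rightarrow> 's::comm_monoid_add \<Rightarrow> 's) \<Rightarrow> ('x, 'v, 'm) wgcl
                 \<Rightarrow> (('x \<Rightarrow> 'v) \<Rightarrow> 's) \<Rightarrow> ('x \<Rightarrow> 'v) \<Rightarrow> 's" where
  "wlp act (Assign x e) f = (\<lambda>\<sigma>. f (\<sigma>(x := e \<sigma>)))"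
| "wlp act (Seq C1 C2) f = wlp act C1 (wlp act C2 f)"
| "wlp act (Ite \<phi> C1 C2) f = (\<lambda>\<sigma>. if \<phi> \<sigma> then wlp act C1 f \<sigma> else wlp act C2 f \<sigma>)"
| "wlp act (Branch C1 C2) f = (\<lambda>\<sigma>. wlp act C1 f \<sigma> + wlp act C2 f \<sigma>)"
| "wlp act (Weight a) f = (\<lambda>\<sigma>. act a (f \<sigma>))"
| "wlp act (While \<phi> C) f =
     nat_gfp (\<lambda>X \<sigma>. if \<phi> \<sigma> then wlp act C X \<sigma> else f \<sigma>)"

text \<open>A configuration is (program or None for termination, state, branching history).
  The history records left (True) / right (False) choices so that different branches
  yield different paths.\<close>
type_synonym ('x, 'v, 'm) config = "('x, 'v, 'm) wgcl option \<times> ('x \<Rightarrow> 'v) \<times> bool list"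

inductive step :: "('x, 'v, 'm::monoid_mult) config \<Rightarrow> 'm \<Rightarrow> ('x, 'v, 'm) config \<Rightarrow> bool" where
  assign: "step (Some (Assign x e), \<sigma>, \<beta>) 1 (None, \<sigma>(x := e \<sigma>), \<beta>)"
| weight: "step (Some (Weight a), \<sigma>, \<beta>) a (None, \<sigma>, \<beta>)"
| seq1: "step (Some C1, \<sigma>, \<beta>) a (Some C1', \<sigma>', \<beta>') \<Longrightarrow>
         step (Some (Seq C1 C2), \<sigma>, \<beta>) a (Some (Seq C1' C2), \<sigma>', \<beta>')"
| seq2: "step (Some C1, \<sigma>, \<beta>) a (None, \<sigma>', \<beta>') \<Longrightarrow>
         step (Some (Seq C1 C2), \<sigma>, \<beta>) a (Some C2, \<sigma>', \<beta>')"
| ite_t: "\<phi> \<sigma> \<Longrightarrow> step (Some (Ite \<phi> C1 C2), \<sigma>, \<beta>) 1 (Some C1, \<sigma>, \<beta>)"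
| ite_f: "\<not> \<phi> \<sigma> \<Longrightarrow> step (Some (Ite \<phi> C1 C2), \<sigma>, \<beta>) 1 (Some C2, \<sigma>, \<beta>)"
| branch_l: "step (Some (Branch C1 C2), \<sigma>, \<beta>) 1 (Some C1, \<sigma>, \<beta> @ [True])"
| branch_r: "step (Some (Branch C1 C2), \<sigma>, \<beta>) 1 (Some C2, \<sigma>, \<beta> @ [False])"
| while_t: "\<phi> \<sigma> \<Longrightarrow> step (Some (While \<phi> C), \<sigma>, \<beta>) 1 (Some (Seq C (While \<phi> C)), \<sigma>, \<beta>)"
| while_f: "\<not> \<phi> \<sigma> \<Longrightarrow> step (Some (While \<phi> C), \<sigma>, \<beta>) 1 (None, \<sigma>, \<beta>)"

text \<open>A path from a configuration c is the list of its successive transitions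
  (weight, target configuration). Terminated configurations (None, _, _) have no
  successors.\<close>
fun is_path :: "('x, 'v, 'm::monoid_mult) config \<Rightarrow> ('m \<times> ('x, 'v, 'm) config) list \<Rightarrow> bool" where
  "is_path c [] = True"
| "is_path c ((a, c') # ts) = (step c a c' \<and> is_path c' ts)"

definition paths :: "nat \<Rightarrow> ('x, 'v, 'm::monoid_mult) config \<Rightarrow> ('m \<times> ('x, 'v, 'm) config) list set" where
  "paths n c = {ts. length ts = n \<and> is_path c ts}"

definition wgt :: "('m::monoid_mult \<times> 'c) list \<Rightarrow> 'm" where
  "wgt ts = prod_list (map fst ts)"

end

theory Submission
  imports Defs
begin

lemma nl_refl[simp]: "nat_le (a::'s::comm_monoid_add) a"
  unfolding nat_le_def by (rule exI[of _ 0]) simp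

lemma nl_trans: "nat_le (a::'s::comm_monoid_add) b \<Longrightarrow> nat_le b c \<Longrightarrow> nat_le a c"
  unfolding nat_le_def by (metis add.assoc)

lemma nl_0[simp]: "nat_le 0 (a::'s::comm_monoid_add)"
  unfolding nat_le_def by auto

lemma nl_add: "nat_le (a::'s::comm_monoid_add) b \<Longrightarrow> nat_le c d \<Longrightarrow> nat_le (a+c) (b+d)"
  unfolding nat_le_def by (metis add.assoc add.commute)

lemma nl_sum: "(\<And>x. x \<in> A \<Longrightarrow> nat_le (f x) (g x)) \<Longrightarrow> nat_le (sum f A) (sum (g::_\<Rightarrow>'s::comm_monoid_add) A)"
proof (induction A rule: infinite_finite_induct)
  case (insert x F) then show ?case by (simp add: nl_add)
qed auto

lemma fnl_refl[simp]: "fun_nat_le f f" by (simp add: fun_nat_le_def)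
lemma fnl_trans: "fun_nat_le f g \<Longrightarrow> fun_nat_le g h \<Longrightarrow> fun_nat_le f h"
  unfolding fun_nat_le_def using nl_trans by blast

lemma glb_mono_chain:
  assumes "is_nat_glb (range a) A" "is_nat_glb (range b) B" "\<And>i. nat_le (a i) (b i)"
  shows "nat_le A B"
proof -
  have "nat_le A (b i)" for i using assms(1,3) unfolding is_nat_glb_def by (meson nl_trans rangeI)
  then show ?thesis using assms(2) unfolding is_nat_glb_def by auto
qed

lemma glb_const: "is_nat_glb (range (\<lambda>i. c)) c"
  unfolding is_nat_glb_def by auto

lemma dec_anti: "nat_dec_chain a \<Longrightarrow> i \<le> j \<Longrightarrow> nat_le (a j) (a i)"
proof (induction j)
  case (Suc j) then show ?case unfolding nat_dec_chain_def
    by (metis le_Suc_eq nl_refl nl_trans)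
qed simp

lemma glb_shift:
  assumes "nat_dec_chain a" "is_nat_glb (range a) A"
  shows "is_nat_glb (range (\<lambda>i. a (Suc i))) A"
  unfolding is_nat_glb_def
proof safe
  fix i show "nat_le A (a (Suc i))" using assms(2) unfolding is_nat_glb_def by auto
next
  fix u assume u: "\<forall>x\<in>range (\<lambda>i. a (Suc i)). nat_le u x"
  have "nat_le u (a i)" for i
    using u assms(1) unfolding nat_dec_chain_def by (meson nl_trans rangeI)
  then show "nat_le u A" using assms(2) unfolding is_nat_glb_def by auto
qed

definition fmono :: "(('a \<Rightarrow> 's::comm_monoid_add) \<Rightarrow> ('b \<Rightarrow> 's)) \<Rightarrow> bool" where
  "fmono \<Phi> \<longleftrightarrow> (\<forall>X Y. fun_nat_le X Y \<longrightarrow> fun_nat_le (\<Phi> X) (\<Phi> Y))"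

definition fcocont :: "(('a \<Rightarrow> 's::comm_monoid_add) \<Rightarrow> ('b \<Rightarrow> 's)) \<Rightarrow> bool" where
  "fcocont \<Phi> \<longleftrightarrow> (\<forall>F Finf. (\<forall>i. fun_nat_le (F (Suc i)) (F i)) \<longrightarrow>
       (\<forall>x. is_nat_glb (range (\<lambda>i. F i x)) (Finf x)) \<longrightarrow>
       (\<forall>y. is_nat_glb (range (\<lambda>i. \<Phi> (F i) y)) (\<Phi> Finf y)))"

locale mm =
  fixes act :: "'m::monoid_mult \<Rightarrow> 's::comm_monoid_add \<Rightarrow> 's"
  assumes mm: "monoid_module act" and ob: "omega_bicontinuous act"
begin

lemma act_one[simp]: "act 1 a = a" using mm unfolding monoid_module_def by auto
lemma act_mult: "act (u * v) a = act u (act v a)" using mm unfolding monoid_module_def by auto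
lemma act_add: "act v (a + b) = act v a + act v b" using mm unfolding monoid_module_def by auto
lemma act_zero[simp]: "act v 0 = 0" using mm unfolding monoid_module_def by auto

lemma antisym: "nat_le (a::'s) b \<Longrightarrow> nat_le b a \<Longrightarrow> a = b"
  using ob unfolding omega_bicontinuous_def by blast

lemma top_ex: "\<exists>t::'s. \<forall>a. nat_le a t" using ob unfolding omega_bicontinuous_def by blast

lemma le_top[simp]: "nat_le (a::'s) nat_top"
proof -
  obtain t :: 's where t: "\<forall>a. nat_le a t" using top_ex by blast
  have "nat_top = t" unfolding nat_top_def
    by (rule the_equality) (use t antisym in auto)
  then show ?thesis using t by simp
qed

lemma dec_glb_ex: "nat_dec_chain (ch::nat \<Rightarrow> 's) \<Longrightarrow> \<exists>s. is_nat_glb (range ch) s"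
  using ob unfolding omega_bicontinuous_def by blast

lemma add_glb: "nat_dec_chain (ch::nat \<Rightarrow> 's) \<Longrightarrow> is_nat_glb (range ch) s \<Longrightarrow>
          is_nat_glb (range (\<lambda>i. ch i + b)) (s + b)"
  using ob unfolding omega_bicontinuous_def by blast

lemma act_glb: "nat_dec_chain (ch::nat \<Rightarrow> 's) \<Longrightarrow> is_nat_glb (range ch) s \<Longrightarrow>
          is_nat_glb (range (\<lambda>i. act v (ch i))) (act v s)"
  using ob unfolding omega_bicontinuous_def by blast

lemma glb_unique: "is_nat_glb A (s::'s) \<Longrightarrow> is_nat_glb A t \<Longrightarrow> s = t"
  unfolding is_nat_glb_def by (meson antisym)

lemma nat_Inf_eq: "is_nat_glb A (s::'s) \<Longrightarrow> nat_Inf A = s"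
  unfolding nat_Inf_def by (rule the_equality) (auto intro: glb_unique)

lemma act_mono: "nat_le a b \<Longrightarrow> nat_le (act v a) (act v b)"
  unfolding nat_le_def by (metis act_add)

lemma act_sum: "act v (sum f A) = sum (\<lambda>x. act v (f x)) A"
  by (induction A rule: infinite_finite_induct) (auto simp: act_add)

lemma add_glb2:
  assumes da: "nat_dec_chain a" and db: "nat_dec_chain b"
    and ga: "is_nat_glb (range a) (A::'s)" and gb: "is_nat_glb (range b) B"
  shows "is_nat_glb (range (\<lambda>i. a i + b i)) (A + B)"
  unfolding is_nat_glb_def
proof safe
  fix i show "nat_le (A + B) (a i + b i)"
    using ga gb unfolding is_nat_glb_def by (auto intro: nl_add)
next
  fix u assume u: "\<forall>x\<in>range (\<lambda>i. a i + b i). nat_le u x"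
  have "nat_le u (a i + b j)" for i j
  proof (cases "i \<le> j")
    case True
    then have "nat_le (a j + b j) (a i + b j)" using dec_anti[OF da] by (simp add: nl_add)
    then show ?thesis using u by (auto intro: nl_trans)
  next
    case False
    then have "nat_le (a i + b i) (a i + b j)" using dec_anti[OF db] by (simp add: nl_add)
    then show ?thesis using u by (auto intro: nl_trans)
  qed
  then have "nat_le u (A + b j)" for j
    using add_glb[OF da ga, of "b j"] unfolding is_nat_glb_def by auto
  then have "nat_le u (b j + A)" for j by (simp add: add.commute)
  then have "nat_le u (B + A)"
    using add_glb[OF db gb, of A] unfolding is_nat_glb_def by auto
  then show "nat_le u (A + B)" by (simp add: add.commute)
qed

lemma sum_dec: "finite F \<Longrightarrow> (\<And>x. x \<in> F \<Longrightarrow> nat_dec_chain (g x)) \<Longrightarrow>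
   nat_dec_chain (\<lambda>i. \<Sum>x\<in>F. g x i)"
  unfolding nat_dec_chain_def by (auto intro: nl_sum)

lemma sum_glb:
  assumes "finite F" "\<And>x. x \<in> F \<Longrightarrow> nat_dec_chain (g x)"
    "\<And>x. x \<in> F \<Longrightarrow> is_nat_glb (range (g x)) (G x :: 's)"
  shows "is_nat_glb (range (\<lambda>i. \<Sum>x\<in>F. g x i)) (\<Sum>x\<in>F. G x)"
  using assms
proof (induction F rule: finite_induct)
  case empty then show ?case using glb_const by simp
next
  case (insert x F)
  have "is_nat_glb (range (\<lambda>i. g x i + (\<Sum>x\<in>F. g x i))) (G x + (\<Sum>x\<in>F. G x))"
  proof (rule add_glb2)
    show "nat_dec_chain (\<lambda>i. \<Sum>x\<in>F. g x i)" using insert(1,4) sum_dec[of F g] by blast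
  qed (use insert in auto)
  then show ?case using insert by simp
qed

end
context mm begin

lemma gfp_char:
  fixes \<Phi> :: "('a \<Rightarrow> 's) \<Rightarrow> ('a \<Rightarrow> 's)"
  assumes mo: "fmono \<Phi>" and co: "fcocont \<Phi>"
  shows "\<Phi> (nat_gfp \<Phi>) = nat_gfp \<Phi> \<and> (\<forall>X. fun_nat_le X (\<Phi> X) \<longrightarrow> fun_nat_le X (nat_gfp \<Phi>))"
proof -
  define T where "T n = (\<Phi> ^^ n) (\<lambda>_. nat_top)" for n
  have Tdec: "fun_nat_le (T (Suc n)) (T n)" for n
  proof (induction n)
    case 0 then show ?case by (simp add: T_def fun_nat_le_def)
  next
    case (Suc n) then show ?case using mo unfolding fmono_def T_def by simp
  qed
  have dc: "nat_dec_chain (\<lambda>n. T n x)" for x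
    using Tdec unfolding nat_dec_chain_def fun_nat_le_def by simp
  define Y where "Y x = nat_Inf (range (\<lambda>n. T n x))" for x
  have gY: "is_nat_glb (range (\<lambda>n. T n x)) (Y x)" for x
    using dec_glb_ex[OF dc[of x]] nat_Inf_eq unfolding Y_def by metis
  have "is_nat_glb (range (\<lambda>n. \<Phi> (T n) x)) (\<Phi> Y x)" for x
    using co Tdec gY unfolding fcocont_def by blast
  moreover have "is_nat_glb (range (\<lambda>n. T (Suc n) x)) (Y x)" for x
    using glb_shift[OF dc gY] by simp
  ultimately have hfix: "\<Phi> Y = Y" using glb_unique unfolding T_def by fastforce
  have post: "fun_nat_le X Y" if X: "fun_nat_le X (\<Phi> X)" for X
  proof -
    have "fun_nat_le X (T n)" for n
    proof (induction n)
      case 0 then show ?case by (simp add: T_def fun_nat_le_def)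
    next
      case (Suc n)
      have "fun_nat_le (\<Phi> X) (T (Suc n))" using mo Suc unfolding fmono_def T_def by simp
      then show ?case using X fnl_trans by blast
    qed
    then show ?thesis using gY unfolding fun_nat_le_def is_nat_glb_def by auto
  qed
  have "nat_gfp \<Phi> = Y" unfolding nat_gfp_def
  proof (rule the_equality)
    show "\<Phi> Y = Y \<and> (\<forall>Z. \<Phi> Z = Z \<longrightarrow> fun_nat_le Z Y)" using hfix post by simp
  next
    fix Z assume "\<Phi> Z = Z \<and> (\<forall>Y. \<Phi> Y = Y \<longrightarrow> fun_nat_le Y Z)"
    then have "fun_nat_le Y Z" "fun_nat_le Z Y" using hfix post by auto
    then show "Z = Y" unfolding fun_nat_le_def using antisym by blast
  qed
  then show ?thesis using hfix post by simp
qed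

lemma gfp_mono:
  fixes \<Phi> \<Psi> :: "('a \<Rightarrow> 's) \<Rightarrow> ('a \<Rightarrow> 's)"
  assumes "fmono \<Phi>" "fcocont \<Phi>" "fmono \<Psi>" "fcocont \<Psi>" "\<And>X. fun_nat_le (\<Phi> X) (\<Psi> X)"
  shows "fun_nat_le (nat_gfp \<Phi>) (nat_gfp \<Psi>)"
  using gfp_char[OF assms(1,2)] gfp_char[OF assms(3,4)] assms(5) by metis

end

definition Wf :: "('m::monoid_mult \<Rightarrow> 's::comm_monoid_add \<Rightarrow> 's) \<Rightarrow> (('x \<Rightarrow> 'v) \<Rightarrow> bool) \<Rightarrow> ('x, 'v, 'm) wgcl
   \<Rightarrow> (('x \<Rightarrow> 'v) \<Rightarrow> 's) \<Rightarrow> (('x \<Rightarrow> 'v) \<Rightarrow> 's) \<Rightarrow> ('x \<Rightarrow> 'v) \<Rightarrow> 's" where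
  "Wf act \<phi> C f = (\<lambda>X \<sigma>. if \<phi> \<sigma> then wlp act C X \<sigma> else f \<sigma>)"

lemma wlp_While': "wlp act (While \<phi> C) f = nat_gfp (Wf act \<phi> C f)"
  by (simp add: Wf_def)

context mm begin

lemma chain_of_fun: "(\<forall>i. fun_nat_le (F (Suc i)) (F i)) \<Longrightarrow> nat_dec_chain (\<lambda>i. F i x)"
  unfolding nat_dec_chain_def fun_nat_le_def by simp

lemma glb_lb: "is_nat_glb (range F) s \<Longrightarrow> nat_le s (F i)"
  unfolding is_nat_glb_def by auto

lemma Wf_props:
  fixes C :: "('x,'v,'m) wgcl"
  assumes "fmono (wlp act C)" "fcocont (wlp act C)"
  shows "fmono (Wf act \<phi> C f) \<and> fcocont (Wf act \<phi> C f)"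
proof
  show "fmono (Wf act \<phi> C f)"
    using assms(1) unfolding fmono_def Wf_def fun_nat_le_def by auto
  show "fcocont (Wf act \<phi> C f)"
    unfolding fcocont_def
  proof (intro allI impI)
    fix F :: "nat \<Rightarrow> ('x \<Rightarrow> 'v) \<Rightarrow> 's" and Finf y
    assume d: "\<forall>i. fun_nat_le (F (Suc i)) (F i)" and g: "\<forall>x. is_nat_glb (range (\<lambda>i. F i x)) (Finf x)"
    show "is_nat_glb (range (\<lambda>i. Wf act \<phi> C f (F i) y)) (Wf act \<phi> C f Finf y)"
    proof (cases "\<phi> y")
      case True then show ?thesis using assms(2) d g unfolding fcocont_def Wf_def by simp
    next
      case False then show ?thesis unfolding Wf_def using glb_const by simp
    qed
  qed
qed

lemma wlp_props: fixes C :: "('x,'v,'m) wgcl" shows "fmono (wlp act C) \<and> fcocont (wlp act C)"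
proof (induction C)
  case (Assign x e)
  show ?case
    unfolding fmono_def fcocont_def fun_nat_le_def by simp
next
  case (Seq C1 C2)
  show ?case
  proof
    show "fmono (wlp act (Seq C1 C2))" using Seq unfolding fmono_def by simp
    show "fcocont (wlp act (Seq C1 C2))" unfolding fcocont_def
    proof (intro allI impI)
      fix F :: "nat \<Rightarrow> ('x \<Rightarrow> 'v) \<Rightarrow> 's" and Finf y
      assume d: "\<forall>i. fun_nat_le (F (Suc i)) (F i)" and g: "\<forall>x. is_nat_glb (range (\<lambda>i. F i x)) (Finf x)"
      have d2: "\<forall>i. fun_nat_le (wlp act C2 (F (Suc i))) (wlp act C2 (F i))"
        using Seq d unfolding fmono_def by blast
      have g2: "\<forall>x. is_nat_glb (range (\<lambda>i. wlp act C2 (F i) x)) (wlp act C2 Finf x)"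
        using Seq d g unfolding fcocont_def by blast
      show "is_nat_glb (range (\<lambda>i. wlp act (Seq C1 C2) (F i) y)) (wlp act (Seq C1 C2) Finf y)"
        using Seq d2 g2 unfolding fcocont_def by simp
    qed
  qed
next
  case (Ite \<phi> C1 C2)
  show ?case
  proof
    show "fmono (wlp act (Ite \<phi> C1 C2))" using Ite unfolding fmono_def fun_nat_le_def by simp
    show "fcocont (wlp act (Ite \<phi> C1 C2))" using Ite unfolding fcocont_def by simp
  qed
next
  case (Branch C1 C2)
  show ?case
  proof
    show "fmono (wlp act (Branch C1 C2))" using Branch unfolding fmono_def fun_nat_le_def
      by (simp add: nl_add)
    show "fcocont (wlp act (Branch C1 C2))" unfolding fcocont_def
    proof (intro allI impI)
      fix F :: "nat \<Rightarrow> ('x \<Rightarrow> 'v) \<Rightarrow> 's" and Finf y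
      assume d: "\<forall>i. fun_nat_le (F (Suc i)) (F i)" and g: "\<forall>x. is_nat_glb (range (\<lambda>i. F i x)) (Finf x)"
      have d1: "\<forall>i. fun_nat_le (wlp act C1 (F (Suc i))) (wlp act C1 (F i))"
        using Branch d unfolding fmono_def by blast
      have d2: "\<forall>i. fun_nat_le (wlp act C2 (F (Suc i))) (wlp act C2 (F i))"
        using Branch d unfolding fmono_def by blast
      have g1: "is_nat_glb (range (\<lambda>i. wlp act C1 (F i) y)) (wlp act C1 Finf y)"
        using Branch d g unfolding fcocont_def by blast
      have g2: "is_nat_glb (range (\<lambda>i. wlp act C2 (F i) y)) (wlp act C2 Finf y)"
        using Branch d g unfolding fcocont_def by blast
      show "is_nat_glb (range (\<lambda>i. wlp act (Branch C1 C2) (F i) y)) (wlp act (Branch C1 C2) Finf y)"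
        using add_glb2[OF chain_of_fun[OF d1] chain_of_fun[OF d2] g1 g2] by simp
    qed
  qed
next
  case (Weight a)
  show ?case
  proof
    show "fmono (wlp act (Weight a))" unfolding fmono_def fun_nat_le_def
      by (simp add: act_mono)
    show "fcocont (wlp act (Weight a))" unfolding fcocont_def wlp.simps
      by (metis act_glb chain_of_fun)
  qed
next
  case (While \<phi> C)
  note WP = Wf_props[OF conjunct1[OF While] conjunct2[OF While]]
  have gmono: "fun_nat_le (wlp act (While \<phi> C) f) (wlp act (While \<phi> C) g)" if "fun_nat_le f g" for f g
    unfolding wlp_While'
    by (rule gfp_mono) (use WP that in \<open>auto simp: Wf_def fun_nat_le_def\<close>)
  show ?case
  proof
    show "fmono (wlp act (While \<phi> C))" using gmono unfolding fmono_def by blast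
    show "fcocont (wlp act (While \<phi> C))" unfolding fcocont_def
    proof (intro allI impI)
      fix F :: "nat \<Rightarrow> ('x \<Rightarrow> 'v) \<Rightarrow> 's" and Finf y
      assume d: "\<forall>i. fun_nat_le (F (Suc i)) (F i)" and g: "\<forall>x. is_nat_glb (range (\<lambda>i. F i x)) (Finf x)"
      define Y where "Y i = wlp act (While \<phi> C) (F i)" for i
      have Yfix: "Wf act \<phi> C (F i) (Y i) = Y i" for i
        unfolding Y_def wlp_While' using gfp_char[OF conjunct1[OF WP] conjunct2[OF WP]] by blast
      have dY: "\<forall>i. fun_nat_le (Y (Suc i)) (Y i)" using gmono d unfolding Y_def by blast
      define Z where "Z x = nat_Inf (range (\<lambda>i. Y i x))" for x
      have gZ: "is_nat_glb (range (\<lambda>i. Y i x)) (Z x)" for x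
        using dec_glb_ex[OF chain_of_fun[OF dY]] nat_Inf_eq unfolding Z_def by metis
      have Zfix: "Wf act \<phi> C Finf Z = Z"
      proof
        fix x show "Wf act \<phi> C Finf Z x = Z x"
        proof (cases "\<phi> x")
          case True
          have "is_nat_glb (range (\<lambda>i. wlp act C (Y i) x)) (wlp act C Z x)"
            using While dY gZ unfolding fcocont_def by blast
          moreover have "wlp act C (Y i) x = Y i x" for i using Yfix[of i] True
            unfolding Wf_def by (metis (mono_tags))
          ultimately show ?thesis using True gZ glb_unique unfolding Wf_def by simp
        next
          case False
          have "Y i x = F i x" for i using Yfix[of i] False
            unfolding Wf_def by (metis (mono_tags))
          then have "is_nat_glb (range (\<lambda>i. F i x)) (Z x)" using gZ[of x] by simp
          then have "Finf x = Z x" using g glb_unique by blast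
          then show ?thesis using False unfolding Wf_def by simp
        qed
      qed
      have Zle: "fun_nat_le Z (wlp act (While \<phi> C) Finf)"
        unfolding wlp_While' using gfp_char[OF conjunct1[OF WP] conjunct2[OF WP]] Zfix by simp
      have Fle: "fun_nat_le Finf (F i)" for i using g unfolding fun_nat_le_def is_nat_glb_def by auto
      show "is_nat_glb (range (\<lambda>i. wlp act (While \<phi> C) (F i) y)) (wlp act (While \<phi> C) Finf y)"
        unfolding is_nat_glb_def
      proof safe
        fix i show "nat_le (wlp act (While \<phi> C) Finf y) (wlp act (While \<phi> C) (F i) y)"
          using gmono[OF Fle[of i]] unfolding fun_nat_le_def by blast
      next
        fix u assume "\<forall>x\<in>range (\<lambda>i. wlp act (While \<phi> C) (F i) y). nat_le u x"
        then have "nat_le u (Z y)" using gZ unfolding Y_def is_nat_glb_def by auto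
        then show "nat_le u (wlp act (While \<phi> C) Finf y)" using Zle nl_trans unfolding fun_nat_le_def by blast
      qed
    qed
  qed
qed

end

definition Succ :: "('x,'v,'m::monoid_mult) config \<Rightarrow> ('m \<times> ('x,'v,'m) config) set" where
  "Succ c = {(a,c'). step c a c'}"

fun lift :: "('x,'v,'m) wgcl \<Rightarrow> ('x,'v,'m) config \<Rightarrow> ('x,'v,'m) config" where
  "lift C2 (None, \<sigma>, \<beta>) = (Some C2, \<sigma>, \<beta>)"
| "lift C2 (Some C, \<sigma>, \<beta>) = (Some (Seq C C2), \<sigma>, \<beta>)"

inductive_cases stepNoneE: "step (None, \<sigma>, \<beta>) a c'"
inductive_cases stepAssignE: "step (Some (Assign x e), \<sigma>, \<beta>) a c'"
inductive_cases stepSeqE: "step (Some (Seq C1 C2), \<sigma>, \<beta>) a c'"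
inductive_cases stepIteE: "step (Some (Ite \<phi> C1 C2), \<sigma>, \<beta>) a c'"
inductive_cases stepBranchE: "step (Some (Branch C1 C2), \<sigma>, \<beta>) a c'"
inductive_cases stepWeightE: "step (Some (Weight w), \<sigma>, \<beta>) a c'"
inductive_cases stepWhileE: "step (Some (While \<phi> C), \<sigma>, \<beta>) a c'"

lemma Succ_None[simp]: "Succ (None, \<sigma>, \<beta>) = {}"
  unfolding Succ_def by (auto elim: stepNoneE)

lemma Succ_Assign: "Succ (Some (Assign x e), \<sigma>, \<beta>) = {(1, (None, \<sigma>(x := e \<sigma>), \<beta>))}"
  unfolding Succ_def by (auto elim: stepAssignE intro: step.intros)

lemma Succ_Weight: "Succ (Some (Weight w), \<sigma>, \<beta>) = {(w, (None, \<sigma>, \<beta>))}"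
  unfolding Succ_def by (auto elim: stepWeightE intro: step.intros)

lemma Succ_Ite: "Succ (Some (Ite \<phi> C1 C2), \<sigma>, \<beta>) = {(1, (Some (if \<phi> \<sigma> then C1 else C2), \<sigma>, \<beta>))}"
  unfolding Succ_def by (auto elim: stepIteE intro: step.intros)

lemma Succ_Branch: "Succ (Some (Branch C1 C2), \<sigma>, \<beta>) =
   {(1, (Some C1, \<sigma>, \<beta> @ [True])), (1, (Some C2, \<sigma>, \<beta> @ [False]))}"
  unfolding Succ_def by (auto elim: stepBranchE intro: step.intros)

lemma Succ_While: "Succ (Some (While \<phi> C), \<sigma>, \<beta>) =
   {(1, if \<phi> \<sigma> then (Some (Seq C (While \<phi> C)), \<sigma>, \<beta>) else (None, \<sigma>, \<beta>))}"
  unfolding Succ_def by (auto elim: stepWhileE intro: step.intros)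

lemma Succ_Seq: "Succ (Some (Seq C1 C2), \<sigma>, \<beta>) = (\<lambda>(a, c). (a, lift C2 c)) ` Succ (Some C1, \<sigma>, \<beta>)"
proof
  show "Succ (Some (Seq C1 C2), \<sigma>, \<beta>) \<subseteq> (\<lambda>(a, c). (a, lift C2 c)) ` Succ (Some C1, \<sigma>, \<beta>)"
    unfolding Succ_def
  proof clarify
    fix a c' assume "step (Some (Seq C1 C2), \<sigma>, \<beta>) a c'"
    then have "(\<exists>C1' \<sigma>' \<beta>'. c' = (Some (Seq C1' C2), \<sigma>', \<beta>') \<and> step (Some C1, \<sigma>, \<beta>) a (Some C1', \<sigma>', \<beta>'))
      \<or> (\<exists>\<sigma>' \<beta>'. c' = (Some C2, \<sigma>', \<beta>') \<and> step (Some C1, \<sigma>, \<beta>) a (None, \<sigma>', \<beta>'))"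
      by (auto elim: stepSeqE)
    then show "(a, c') \<in> (\<lambda>(a, c). (a, lift C2 c)) ` {(a, c'). step (Some C1, \<sigma>, \<beta>) a c'}"
    proof (elim disjE exE conjE)
      fix C1' \<sigma>' \<beta>' assume "c' = (Some (Seq C1' C2), \<sigma>', \<beta>')" "step (Some C1, \<sigma>, \<beta>) a (Some C1', \<sigma>', \<beta>')"
      then show ?thesis by (intro image_eqI[where x="(a, (Some C1', \<sigma>', \<beta>'))"]) auto
    next
      fix \<sigma>' \<beta>' assume "c' = (Some C2, \<sigma>', \<beta>')" "step (Some C1, \<sigma>, \<beta>) a (None, \<sigma>', \<beta>')"
      then show ?thesis by (intro image_eqI[where x="(a, (None, \<sigma>', \<beta>'))"]) auto
    qed
  qed
next
  show "(\<lambda>(a, c). (a, lift C2 c)) ` Succ (Some C1, \<sigma>, \<beta>) \<subseteq> Succ (Some (Seq C1 C2), \<sigma>, \<beta>)"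
  proof
    fix t assume "t \<in> (\<lambda>(a, c). (a, lift C2 c)) ` Succ (Some C1, \<sigma>, \<beta>)"
    then obtain a oc \<sigma>' \<beta>' where t: "t = (a, lift C2 (oc, \<sigma>', \<beta>'))"
      and s: "step (Some C1, \<sigma>, \<beta>) a (oc, \<sigma>', \<beta>')" unfolding Succ_def by auto
    have "step (Some (Seq C1 C2), \<sigma>, \<beta>) a (lift C2 (oc, \<sigma>', \<beta>'))"
      using s by (cases oc) (auto intro: step.intros)
    then show "t \<in> Succ (Some (Seq C1 C2), \<sigma>, \<beta>)" unfolding Succ_def t by simp
  qed
qed

lemma Seq_neq: "Seq C1 C2 \<noteq> C2"
  by (induction C2 arbitrary: C1) auto

lemma inj_lift: "inj (lift C2)"
proof (rule injI)
  fix x y assume "lift C2 x = lift C2 y"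
  moreover obtain ox sx bx oy sy bb where "x = (ox, sx, bx)" "y = (oy, sy, bb)" by (cases x, cases y) auto
  ultimately show "x = y"
    by (cases ox; cases oy) (auto dest: sym simp: Seq_neq)
qed

lemma inj_lift2: "inj_on (\<lambda>(a, c). (a, lift C2 c)) A"
  using inj_lift[of C2] unfolding inj_on_def inj_def by auto

lemma finite_Succ: "finite (Succ c)"
proof -
  obtain oc \<sigma> \<beta> where c: "c = (oc, \<sigma>, \<beta>)" by (cases c) auto
  have "finite (Succ (Some C, \<sigma>, \<beta>))" for C :: "('xx,'vv,'mm::monoid_mult) wgcl" and \<sigma> \<beta>
    by (induction C arbitrary: \<sigma> \<beta>)
      (auto simp: Succ_Assign Succ_Weight Succ_Ite Succ_Branch Succ_While Succ_Seq)
  then show ?thesis using c by (cases oc) auto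
qed

lemma step_shift:
  "step x a y \<Longrightarrow> \<exists>d. snd (snd y) = snd (snd x) @ d \<and>
     (\<forall>\<beta>0. step (fst x, fst (snd x), \<beta>0) a (fst y, fst (snd y), \<beta>0 @ d))"
proof (induction rule: step.induct)
  case (assign x e \<sigma> \<beta>)
  show ?case unfolding fst_conv snd_conv by (intro exI[of _ "[]"] conjI allI) (simp, unfold append_Nil2, rule step.assign)
next
  case (weight a \<sigma> \<beta>)
  show ?case by (rule exI[of _ "[]"]) (simp add: step.weight)
next
  case (seq1 C1 \<sigma> \<beta> a C1' \<sigma>' \<beta>' C2)
  then obtain d where "\<beta>' = \<beta> @ d" "\<forall>\<beta>0. step (Some C1, \<sigma>, \<beta>0) a (Some C1', \<sigma>', \<beta>0 @ d)" by auto
  then show ?case by (intro exI[of _ d]) (simp add: step.seq1)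
next
  case (seq2 C1 \<sigma> \<beta> a \<sigma>' \<beta>' C2)
  then obtain d where "\<beta>' = \<beta> @ d" "\<forall>\<beta>0. step (Some C1, \<sigma>, \<beta>0) a (None, \<sigma>', \<beta>0 @ d)" by auto
  then show ?case by (intro exI[of _ d]) (simp add: step.seq2)
next
  case (ite_t \<phi> \<sigma> C1 C2 \<beta>)
  then show ?case by (intro exI[of _ "[]"]) (simp add: step.ite_t)
next
  case (ite_f \<phi> \<sigma> C1 C2 \<beta>)
  then show ?case by (intro exI[of _ "[]"]) (simp add: step.ite_f)
next
  case (branch_l C1 C2 \<sigma> \<beta>)
  show ?case by (intro exI[of _ "[True]"]) (simp add: step.branch_l)
next
  case (branch_r C1 C2 \<sigma> \<beta>)
  show ?case by (intro exI[of _ "[False]"]) (simp add: step.branch_r)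
next
  case (while_t \<phi> \<sigma> C \<beta>)
  then show ?case by (intro exI[of _ "[]"]) (simp add: step.while_t)
next
  case (while_f \<phi> \<sigma> C \<beta>)
  then show ?case by (intro exI[of _ "[]"]) (simp add: step.while_f)
qed

lemma step_shift': "step (c, \<sigma>, \<beta>) a (c', \<sigma>', \<gamma>) \<Longrightarrow>
   \<exists>d. \<gamma> = \<beta> @ d \<and> (\<forall>\<beta>0. step (c, \<sigma>, \<beta>0) a (c', \<sigma>', \<beta>0 @ d))"
  using step_shift by fastforce

lemma Succ_shift: "Succ (c, \<sigma>, \<beta>) = (\<lambda>(a, (c', \<sigma>', \<gamma>)). (a, (c', \<sigma>', \<beta> @ \<gamma>))) ` Succ (c, \<sigma>, [])"
proof
  show "Succ (c, \<sigma>, \<beta>) \<subseteq> (\<lambda>(a, (c', \<sigma>', \<gamma>)). (a, (c', \<sigma>', \<beta> @ \<gamma>))) ` Succ (c, \<sigma>, [])"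
  proof
    fix t assume t: "t \<in> Succ (c, \<sigma>, \<beta>)"
    obtain a c' \<sigma>' \<gamma> where te: "t = (a, c', \<sigma>', \<gamma>)" by (cases t) auto
    have st: "step (c, \<sigma>, \<beta>) a (c', \<sigma>', \<gamma>)" using t unfolding te Succ_def by simp
    from step_shift'[OF st] obtain d where d: "\<gamma> = \<beta> @ d" "\<forall>\<beta>0. step (c, \<sigma>, \<beta>0) a (c', \<sigma>', \<beta>0 @ d)"
      by blast
    have "step (c, \<sigma>, []) a (c', \<sigma>', d)" using spec[OF d(2), of "[]"] by simp
    then have "(a, c', \<sigma>', d) \<in> Succ (c, \<sigma>, [])" unfolding Succ_def by simp
    then show "t \<in> (\<lambda>(a, (c', \<sigma>', \<gamma>)). (a, (c', \<sigma>', \<beta> @ \<gamma>))) ` Succ (c, \<sigma>, [])"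
      unfolding te d(1) by (rule rev_image_eqI) simp
  qed
next
  show "(\<lambda>(a, (c', \<sigma>', \<gamma>)). (a, (c', \<sigma>', \<beta> @ \<gamma>))) ` Succ (c, \<sigma>, []) \<subseteq> Succ (c, \<sigma>, \<beta>)"
  proof
    fix t assume "t \<in> (\<lambda>(a, (c', \<sigma>', \<gamma>)). (a, (c', \<sigma>', \<beta> @ \<gamma>))) ` Succ (c, \<sigma>, [])"
    then obtain u where u: "u \<in> Succ (c, \<sigma>, [])" "t = (\<lambda>(a, (c', \<sigma>', \<gamma>)). (a, (c', \<sigma>', \<beta> @ \<gamma>))) u"
      by blast
    obtain a c' \<sigma>' \<gamma> where ue: "u = (a, c', \<sigma>', \<gamma>)" by (cases u) auto
    have st: "step (c, \<sigma>, []) a (c', \<sigma>', \<gamma>)" using u(1) unfolding ue Succ_def by simp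
    from step_shift'[OF st] obtain d where d: "\<gamma> = d" "\<forall>\<beta>0. step (c, \<sigma>, \<beta>0) a (c', \<sigma>', \<beta>0 @ d)"
      by auto
    then show "t \<in> Succ (c, \<sigma>, \<beta>)" unfolding u(2) ue Succ_def by simp
  qed
qed

lemma inj_shift: "inj_on (\<lambda>(a, (c', \<sigma>', \<gamma>)). (a, (c', \<sigma>', \<beta> @ \<gamma>))) A"
  by (rule inj_onI) (clarsimp split: prod.splits)

lemma paths_0: "paths 0 c = {[]}" unfolding paths_def by auto

lemma paths_Suc: "paths (Suc n) c = (\<lambda>(t, \<pi>). t # \<pi>) ` (SIGMA t:Succ c. paths n (snd t))"
proof
  show "paths (Suc n) c \<subseteq> (\<lambda>(t, \<pi>). t # \<pi>) ` (SIGMA t:Succ c. paths n (snd t))"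
  proof
    fix ts assume ts: "ts \<in> paths (Suc n) c"
    then obtain a c' \<pi> where e: "ts = (a, c') # \<pi>"
      unfolding paths_def by (cases ts) auto
    with ts have "length \<pi> = n" "step c a c'" "is_path c' \<pi>" unfolding paths_def by auto
    then have "((a, c'), \<pi>) \<in> (SIGMA t:Succ c. paths n (snd t))" unfolding Succ_def paths_def by simp
    then show "ts \<in> (\<lambda>(t, \<pi>). t # \<pi>) ` (SIGMA t:Succ c. paths n (snd t))"
      unfolding e by (rule rev_image_eqI) simp
  qed
next
  show "(\<lambda>(t, \<pi>). t # \<pi>) ` (SIGMA t:Succ c. paths n (snd t)) \<subseteq> paths (Suc n) c"
  proof
    fix ts assume "ts \<in> (\<lambda>(t, \<pi>). t # \<pi>) ` (SIGMA t:Succ c. paths n (snd t))"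
    then obtain t \<pi> where "t \<in> Succ c" "\<pi> \<in> paths n (snd t)" "ts = t # \<pi>" by auto
    moreover obtain a c' where "t = (a, c')" by (cases t)
    ultimately have e: "ts = (a, c') # \<pi>" and "step c a c'" "\<pi> \<in> paths n c'" unfolding Succ_def by auto
    then show "ts \<in> paths (Suc n) c" unfolding paths_def by simp
  qed
qed

lemma finite_paths: "finite (paths n c)"
proof (induction n arbitrary: c)
  case 0 then show ?case unfolding paths_0 by simp
next
  case (Suc n)
  have "finite (SIGMA t:Succ c. paths n (snd t))"
    using finite_Succ[of c] Suc by (intro finite_SigmaI) auto
  then show ?case unfolding paths_Suc by (rule finite_imageI)
qed

context mm begin

definition P :: "nat \<Rightarrow> ('x,'v,'m) config \<Rightarrow> 's" where
  "P n c = (\<Sum>\<pi>\<in>paths n c. act (wgt \<pi>) nat_top)"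

lemma P_0: "P 0 c = nat_top" by (simp add: P_def paths_0 wgt_def)

lemma P_Suc: "P (Suc n) c = (\<Sum>t\<in>Succ c. act (fst t) (P n (snd t)))"
proof -
  have inj: "inj_on (\<lambda>(t, \<pi>). t # \<pi>) (SIGMA t:Succ c. paths n (snd t))"
    unfolding inj_on_def by auto
  have "P (Suc n) c = (\<Sum>x\<in>(SIGMA t:Succ c. paths n (snd t)). act (wgt (fst x # snd x)) nat_top)"
    unfolding P_def paths_Suc by (subst sum.reindex[OF inj]) (simp add: comp_def case_prod_beta)
  also have "\<dots> = (\<Sum>t\<in>Succ c. \<Sum>\<pi>\<in>paths n (snd t). act (wgt (t # \<pi>)) nat_top)"
    by (subst sum.Sigma) (auto simp: finite_Succ finite_paths case_prod_beta)
  also have "\<dots> = (\<Sum>t\<in>Succ c. act (fst t) (P n (snd t)))"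
    unfolding P_def by (simp add: act_sum wgt_def act_mult)
  finally show ?thesis .
qed

lemma P_None: "P (Suc n) (None, \<sigma>, \<beta>) = 0" by (simp add: P_Suc)

lemma P_beta: "P n (c, \<sigma>, \<beta>) = P n (c, \<sigma>, [])"
proof (induction n arbitrary: c \<sigma> \<beta>)
  case 0 then show ?case by (simp add: P_0)
next
  case (Suc n)
  have "P (Suc n) (c, \<sigma>, \<beta>) =
    (\<Sum>t\<in>Succ (c, \<sigma>, []). act (fst t) (P n (snd ((\<lambda>(a, (c', \<sigma>', \<gamma>)). (a, (c', \<sigma>', \<beta> @ \<gamma>))) t))))"
    unfolding P_Suc by (subst Succ_shift, subst sum.reindex[OF inj_shift]) (simp add: comp_def case_prod_beta)
  also have "\<dots> = P (Suc n) (c, \<sigma>, [])"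
    unfolding P_Suc
  proof (rule sum.cong)
    fix t assume "t \<in> Succ (c, \<sigma>, [])"
    obtain a c' \<sigma>' \<gamma> where te: "t = (a, c', \<sigma>', \<gamma>)" by (cases t) auto
    show "act (fst t) (P n (snd ((\<lambda>(a, (c', \<sigma>', \<gamma>)). (a, (c', \<sigma>', \<beta> @ \<gamma>))) t))) = act (fst t) (P n (snd t))"
      unfolding te using Suc.IH[of c' \<sigma>' "\<beta> @ \<gamma>"] Suc.IH[of c' \<sigma>' \<gamma>] by simp
  qed simp
  finally show ?case .
qed

end
context mm begin

definition K :: "(('x \<Rightarrow> 'v) \<Rightarrow> 's) \<Rightarrow> ('x,'v,'m) config \<Rightarrow> 's" where
  "K f c = (case fst c of None \<Rightarrow> f (fst (snd c)) | Some C \<Rightarrow> wlp act C f (fst (snd c)))"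

lemma K_None[simp]: "K f (None, \<sigma>, \<beta>) = f \<sigma>" by (simp add: K_def)
lemma K_Some[simp]: "K f (Some C, \<sigma>, \<beta>) = wlp act C f \<sigma>" by (simp add: K_def)

lemma K_lift: "K f (lift C2 c) = K (wlp act C2 f) c"
proof -
  obtain oc \<sigma> \<beta> where "c = (oc, \<sigma>, \<beta>)" by (cases c) auto
  then show ?thesis by (cases oc) auto
qed

lemma WP: "fmono (Wf act \<phi> C f) \<and> fcocont (Wf act \<phi> C f)"
  by (rule Wf_props[OF conjunct1[OF wlp_props] conjunct2[OF wlp_props]])

lemma wlp_While_fix: "Wf act \<phi> C f (wlp act (While \<phi> C) f) = wlp act (While \<phi> C) f"
  unfolding wlp_While' using gfp_char[OF conjunct1[OF WP] conjunct2[OF WP]] by (rule conjunct1)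

lemma wlp_While_unfold:
  "wlp act (While \<phi> C) f \<sigma> = (if \<phi> \<sigma> then wlp act C (wlp act (While \<phi> C) f) \<sigma> else f \<sigma>)"
proof -
  have "Wf act \<phi> C f (wlp act (While \<phi> C) f) \<sigma> = wlp act (While \<phi> C) f \<sigma>"
    using wlp_While_fix by (rule fun_cong)
  then show ?thesis unfolding Wf_def by simp
qed

lemma sum_lift:
  "(\<Sum>t\<in>Succ (Some (Seq C1 C2), \<sigma>, \<beta>). g (fst t) (snd t)) =
   (\<Sum>t\<in>Succ (Some C1, \<sigma>, \<beta>). g (fst t) (lift C2 (snd t)))"
  unfolding Succ_Seq by (subst sum.reindex[OF inj_lift2]) (simp add: comp_def case_prod_beta)

lemma wlp_step: "wlp act C f \<sigma> = (\<Sum>t\<in>Succ (Some C, \<sigma>, \<beta>). act (fst t) (K f (snd t)))"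
proof (induction C arbitrary: f \<sigma> \<beta>)
  case (Assign x e) then show ?case by (simp add: Succ_Assign)
next
  case (Seq C1 C2)
  have "(\<Sum>t\<in>Succ (Some (Seq C1 C2), \<sigma>, \<beta>). act (fst t) (K f (snd t))) =
    (\<Sum>t\<in>Succ (Some C1, \<sigma>, \<beta>). act (fst t) (K (wlp act C2 f) (snd t)))"
    using sum_lift[where g="\<lambda>a c. act a (K f c)"] by (simp add: K_lift)
  then show ?case using Seq.IH(1)[of "wlp act C2 f" \<sigma> \<beta>] by simp
next
  case (Ite \<phi> C1 C2) then show ?case by (simp add: Succ_Ite)
next
  case (Branch C1 C2) then show ?case by (simp add: Succ_Branch)
next
  case (Weight w) then show ?case by (simp add: Succ_Weight)
next
  case (While \<phi> C)
  show ?case by (subst wlp_While_unfold) (simp add: Succ_While)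
qed

lemma le_P: "nat_le (K (\<lambda>_. 0) c) (P n c)"
proof (induction n arbitrary: c)
  case 0 then show ?case by (simp add: P_0)
next
  case (Suc n)
  obtain oc \<sigma> \<beta> where c: "c = (oc, \<sigma>, \<beta>)" by (cases c) auto
  show ?case
  proof (cases oc)
    case None then show ?thesis using c by simp
  next
    case (Some C)
    have "K (\<lambda>_. 0) c = (\<Sum>t\<in>Succ c. act (fst t) (K (\<lambda>_. 0) (snd t)))"
      using c Some wlp_step by simp
    also have "nat_le \<dots> (\<Sum>t\<in>Succ c. act (fst t) (P n (snd t)))"
      by (rule nl_sum) (simp add: act_mono Suc)
    also have "\<dots> = P (Suc n) c" by (simp add: P_Suc)
    finally show ?thesis .
  qed
qed

lemma P_dec: "nat_le (P (Suc n) c) (P n c)"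
proof (induction n arbitrary: c)
  case 0 then show ?case by (simp add: P_0)
next
  case (Suc n)
  show ?case unfolding P_Suc[of "Suc n" c] P_Suc[of n c]
    by (rule nl_sum) (rule act_mono, rule Suc.IH)
qed

definition G :: "('x,'v,'m) config \<Rightarrow> 's" where
  "G c = nat_Inf (range (\<lambda>n. P n c))"

lemma P_chain: "nat_dec_chain (\<lambda>n. P n c)"
  unfolding nat_dec_chain_def using P_dec by blast

lemma gG: "is_nat_glb (range (\<lambda>n. P n c)) (G c)"
  using dec_glb_ex[OF P_chain] nat_Inf_eq unfolding G_def by metis

lemma G_post: "nat_le (G c) (\<Sum>t\<in>Succ c. act (fst t) (G (snd t)))"
proof -
  have "is_nat_glb (range (\<lambda>i. \<Sum>t\<in>Succ c. act (fst t) (P i (snd t)))) (\<Sum>t\<in>Succ c. act (fst t) (G (snd t)))"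
  proof (rule sum_glb)
    show "finite (Succ c)" by (rule finite_Succ)
    fix t
    show "nat_dec_chain (\<lambda>i. act (fst t) (P i (snd t)))"
      unfolding nat_dec_chain_def by (simp add: act_mono P_dec)
    show "is_nat_glb (range (\<lambda>i. act (fst t) (P i (snd t)))) (act (fst t) (G (snd t)))"
      by (rule act_glb[OF P_chain gG])
  qed
  then have g: "is_nat_glb (range (\<lambda>i. P (Suc i) c)) (\<Sum>t\<in>Succ c. act (fst t) (G (snd t)))"
    by (simp add: P_Suc)
  have "nat_le (G c) (P (Suc i) c)" for i using gG[of c] unfolding is_nat_glb_def by auto
  then show ?thesis using g unfolding is_nat_glb_def by auto
qed

lemma G_None: "nat_le (G (None, \<sigma>, \<beta>)) 0"
  using gG[of "(None, \<sigma>, \<beta>)"] P_None[of 0 \<sigma> \<beta>] unfolding is_nat_glb_def by (metis rangeI)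

lemma G_beta: "G (c, \<sigma>, \<beta>) = G (c, \<sigma>, \<beta>')"
  unfolding G_def using P_beta by metis

lemma lift_post:
  assumes post: "\<forall>C \<sigma> \<beta>. nat_le (H (Some C, \<sigma>, \<beta>)) (\<Sum>t\<in>Succ (Some C, \<sigma>, \<beta>). act (fst t) (H (snd t)))"
  shows "\<forall>C \<sigma> \<beta>. nat_le (H (lift C2 (Some C, \<sigma>, \<beta>))) (\<Sum>t\<in>Succ (Some C, \<sigma>, \<beta>). act (fst t) (H (lift C2 (snd t))))"
proof (intro allI)
  fix C \<sigma> \<beta>
  show "nat_le (H (lift C2 (Some C, \<sigma>, \<beta>))) (\<Sum>t\<in>Succ (Some C, \<sigma>, \<beta>). act (fst t) (H (lift C2 (snd t))))"
    using post[rule_format, of "Seq C C2" \<sigma> \<beta>] unfolding sum_lift[where g="\<lambda>a c. act a (H c)"] by simp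
qed

lemma lift_beta:
  assumes "\<forall>c \<sigma> \<beta> \<beta>'. H (c, \<sigma>, \<beta>) = H (c, \<sigma>, \<beta>')"
  shows "\<forall>c \<sigma> \<beta> \<beta>'. H (lift C2 (c, \<sigma>, \<beta>)) = H (lift C2 (c, \<sigma>, \<beta>'))"
proof (intro allI)
  fix c \<sigma> \<beta> \<beta>' show "H (lift C2 (c, \<sigma>, \<beta>)) = H (lift C2 (c, \<sigma>, \<beta>'))"
    using assms by (cases c) simp_all
qed

lemma upper:
  fixes H :: "('x,'v,'m) config \<Rightarrow> 's"
  assumes post: "\<forall>C \<sigma> \<beta>. nat_le (H (Some C, \<sigma>, \<beta>)) (\<Sum>t\<in>Succ (Some C, \<sigma>, \<beta>). act (fst t) (H (snd t)))"
    and beta: "\<forall>c \<sigma> \<beta> \<beta>'. H (c, \<sigma>, \<beta>) = H (c, \<sigma>, \<beta>')"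
    and fin: "\<forall>\<sigma> \<beta>. nat_le (H (None, \<sigma>, \<beta>)) (f \<sigma>)"
  shows "nat_le (H (Some C, \<sigma>, \<beta>)) (wlp act C f \<sigma>)"
  using post beta fin
proof (induction C arbitrary: f H \<sigma> \<beta>)
  case (Assign x e)
  then show ?case using Assign.prems(1)[rule_format, of "Assign x e" \<sigma> \<beta>]
    by (simp add: Succ_Assign) (meson nl_trans)
next
  case (Weight w)
  have "nat_le (act w (H (None, \<sigma>, \<beta>))) (act w (f \<sigma>))" using Weight.prems(3) by (simp add: act_mono)
  then show ?case using Weight.prems(1)[rule_format, of "Weight w" \<sigma> \<beta>]
    by (simp add: Succ_Weight) (meson nl_trans)
next
  case (Ite \<phi> C1 C2)
  have "nat_le (H (Some (if \<phi> \<sigma> then C1 else C2), \<sigma>, \<beta>)) (wlp act (if \<phi> \<sigma> then C1 else C2) f \<sigma>)"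
    using Ite.IH(1)[OF Ite.prems] Ite.IH(2)[OF Ite.prems] by (cases "\<phi> \<sigma>") simp_all
  moreover have "nat_le (H (Some (Ite \<phi> C1 C2), \<sigma>, \<beta>)) (H (Some (if \<phi> \<sigma> then C1 else C2), \<sigma>, \<beta>))"
    using Ite.prems(1)[rule_format, of "Ite \<phi> C1 C2" \<sigma> \<beta>] by (simp add: Succ_Ite)
  moreover have "wlp act (Ite \<phi> C1 C2) f \<sigma> = wlp act (if \<phi> \<sigma> then C1 else C2) f \<sigma>" by simp
  ultimately show ?case by (simp only:) (rule nl_trans)
next
  case (Branch C1 C2)
  have "nat_le (H (Some C1, \<sigma>, \<beta> @ [True]) + H (Some C2, \<sigma>, \<beta> @ [False])) (wlp act C1 f \<sigma> + wlp act C2 f \<sigma>)"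
    using Branch.IH(1)[OF Branch.prems] Branch.IH(2)[OF Branch.prems] by (intro nl_add)
  then show ?case using Branch.prems(1)[rule_format, of "Branch C1 C2" \<sigma> \<beta>]
    by (simp add: Succ_Branch) (meson nl_trans)
next
  case (Seq C1 C2)
  have c2: "\<forall>\<sigma> \<beta>. nat_le (H (Some C2, \<sigma>, \<beta>)) (wlp act C2 f \<sigma>)"
    using Seq.IH(2)[OF Seq.prems] by blast
  have "nat_le ((H \<circ> lift C2) (Some C1, \<sigma>, \<beta>)) (wlp act C1 (wlp act C2 f) \<sigma>)"
  proof (rule Seq.IH(1))
    show "\<forall>C \<sigma> \<beta>. nat_le ((H \<circ> lift C2) (Some C, \<sigma>, \<beta>)) (\<Sum>t\<in>Succ (Some C, \<sigma>, \<beta>). act (fst t) ((H \<circ> lift C2) (snd t)))"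
      using lift_post[OF Seq.prems(1)] by simp
    show "\<forall>c \<sigma> \<beta> \<beta>'. (H \<circ> lift C2) (c, \<sigma>, \<beta>) = (H \<circ> lift C2) (c, \<sigma>, \<beta>')"
      using lift_beta[OF Seq.prems(2)] by simp
    show "\<forall>\<sigma> \<beta>. nat_le ((H \<circ> lift C2) (None, \<sigma>, \<beta>)) (wlp act C2 f \<sigma>)"
      using c2 by simp
  qed
  then show ?case by simp
next
  case (While \<phi> C)
  define X where "X \<sigma> = H (Some (While \<phi> C), \<sigma>, [])" for \<sigma>
  have "fun_nat_le X (Wf act \<phi> C f X)" unfolding fun_nat_le_def
  proof
    fix \<sigma>
    show "nat_le (X \<sigma>) (Wf act \<phi> C f X \<sigma>)"
    proof (cases "\<phi> \<sigma>")
      case True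
      have "nat_le ((H \<circ> lift (While \<phi> C)) (Some C, \<sigma>, [])) (wlp act C X \<sigma>)"
      proof (rule While.IH)
        show "\<forall>D \<sigma> \<beta>. nat_le ((H \<circ> lift (While \<phi> C)) (Some D, \<sigma>, \<beta>)) (\<Sum>t\<in>Succ (Some D, \<sigma>, \<beta>). act (fst t) ((H \<circ> lift (While \<phi> C)) (snd t)))"
          using lift_post[OF While.prems(1)] by simp
        show "\<forall>c \<sigma> \<beta> \<beta>'. (H \<circ> lift (While \<phi> C)) (c, \<sigma>, \<beta>) = (H \<circ> lift (While \<phi> C)) (c, \<sigma>, \<beta>')"
          using lift_beta[OF While.prems(2)] by simp
        show "\<forall>\<sigma> \<beta>. nat_le ((H \<circ> lift (While \<phi> C)) (None, \<sigma>, \<beta>)) (X \<sigma>)"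
        proof (intro allI)
          fix \<sigma>' \<beta>'
          have "H (Some (While \<phi> C), \<sigma>', \<beta>') = H (Some (While \<phi> C), \<sigma>', [])"
            using While.prems(2) by blast
          then show "nat_le ((H \<circ> lift (While \<phi> C)) (None, \<sigma>', \<beta>')) (X \<sigma>')"
            by (simp add: X_def)
        qed
      qed
      moreover have B: "nat_le (X \<sigma>) (H (Some (Seq C (While \<phi> C)), \<sigma>, []))"
        using While.prems(1)[rule_format, of "While \<phi> C" \<sigma> "[]"] True unfolding X_def
        by (simp add: Succ_While)
      ultimately have "nat_le (X \<sigma>) (wlp act C X \<sigma>)"
        by (simp add: nl_trans[OF B])
      then show ?thesis using True by (simp add: Wf_def)
    next
      case False
      have "nat_le (X \<sigma>) (H (None, \<sigma>, []))"
        using While.prems(1)[rule_format, of "While \<phi> C" \<sigma> "[]"] False unfolding X_def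
        by (simp add: Succ_While)
      moreover have "nat_le (H (None, \<sigma>, [])) (f \<sigma>)" using While.prems(3) by blast
      ultimately have "nat_le (X \<sigma>) (f \<sigma>)" by (rule nl_trans)
      then show ?thesis using False by (simp add: Wf_def)
    qed
  qed
  then have "fun_nat_le X (wlp act (While \<phi> C) f)"
    unfolding wlp_While' using gfp_char[OF conjunct1[OF WP] conjunct2[OF WP]] by blast
  then have "nat_le (X \<sigma>) (wlp act (While \<phi> C) f \<sigma>)" unfolding fun_nat_le_def by blast
  moreover have "H (Some (While \<phi> C), \<sigma>, \<beta>) = X \<sigma>"
    using While.prems(2) unfolding X_def by blast
  ultimately show ?case by simp
qed

lemma main:
  "is_nat_glb (range (\<lambda>n. P n (Some C, \<sigma>, []))) (wlp act C (\<lambda>_. 0) \<sigma>)"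
  unfolding is_nat_glb_def
proof safe
  fix n show "nat_le (wlp act C (\<lambda>_. 0) \<sigma>) (P n (Some C, \<sigma>, []))"
    using le_P[of "(Some C, \<sigma>, [])" n] by simp
next
  fix u assume "\<forall>x\<in>range (\<lambda>n. P n (Some C, \<sigma>, [])). nat_le u x"
  then have "nat_le u (G (Some C, \<sigma>, []))" using gG[of "(Some C, \<sigma>, [])"] unfolding is_nat_glb_def by simp
  moreover have "nat_le (G (Some C, \<sigma>, [])) (wlp act C (\<lambda>_. 0) \<sigma>)"
  proof (rule upper)
    show "\<forall>C \<sigma> \<beta>. nat_le (G (Some C, \<sigma>, \<beta>)) (\<Sum>t\<in>Succ (Some C, \<sigma>, \<beta>). act (fst t) (G (snd t)))"
      using G_post by (intro allI) (rule G_post)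
    show "\<forall>c \<sigma> \<beta> \<beta>'. G (c, \<sigma>, \<beta>) = G (c, \<sigma>, \<beta>')" by (intro allI) (rule G_beta)
    show "\<forall>\<sigma> \<beta>. nat_le (G (None, \<sigma>, \<beta>)) 0" by (intro allI) (rule G_None)
  qed
  ultimately show "nat_le u (wlp act C (\<lambda>_. 0) \<sigma>)" by (rule nl_trans)
qed

end

theorem mainTheorem6:
  fixes act :: "'m::monoid_mult \<Rightarrow> 's::comm_monoid_add \<Rightarrow> 's"
    and C :: "('x, 'v, 'm) wgcl"
    and \<sigma> :: "'x \<Rightarrow> 'v"
  assumes "monoid_module act"
    and "omega_bicontinuous act"
  shows "wlp act C (\<lambda>_. 0) \<sigma> =
    nat_Inf (range (\<lambda>n. \<Sum>\<pi>\<in>paths n (Some C, \<sigma>, []). act (wgt \<pi>) nat_top))"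
proof -
  interpret mm act using assms by (rule mm.intro)
  have "is_nat_glb (range (\<lambda>n. P n (Some C, \<sigma>, []))) (wlp act C (\<lambda>_. 0) \<sigma>)" by (rule main)
  then have "nat_Inf (range (\<lambda>n. P n (Some C, \<sigma>, []))) = wlp act C (\<lambda>_. 0) \<sigma>" by (rule nat_Inf_eq)
  then show ?thesis unfolding P_def by simp
qed

end
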